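(* Let $\mathcal{G}$ be a groupoid, $\mathbb{K}$ a field, $S$ a $\mathbb{K}$-cancellative semigroup and $\Gamma:\mathcal{G}\to S$ a partial projective representation with factor set $\sigma$ and $D=\mathrm{dom}\,\sigma$, such that $\Gamma(r(x))\Gamma(x)=\Gamma(x)=\Gamma(x)\Gamma(d(x))$ for all $x\in\mathcal{G}$. If $(x,y) \in D$, then $(x,d(x)),(r(y),y) \in D$ and $$\sigma(x,d(x)) = \sigma(r(x),x) = \sigma(y,d(y)) = \sigma(r(y),y) = 1.$$
   Context: A groupoid is a nonempty set $\mathcal{G}$ with a partial associative product, each $g$ having right identity $d(g)=g^{-1}g$, left identity $r(g)=gg^{-1}$ and inverse $g^{-1}$; $xy$ is defined ($\exists xy$) iff $d(x)=r(y)$; $\mathcal{G}_0$ identities, $\mathcal{G}^2$ composable pairs. A $\mathbb{K}$-semigroup is a semigroup $S$ with zero with a scalar action $\mathbb{K}\times S\to S$ satisfying $\alpha(\beta x)=(\alpha\beta)x$, $1x=x$, $\alpha(xy)=(\alpha x)y=x(\alpha y)$, $0x=0$; it is $\mathbb{K}$-cancellative if $\alpha x=\beta x$, $x\ne0$ imply $\alpha=\beta$. Let $\mathcal{P}(S)=S/\lambda$ where $x\lambda y$ iff $x=\alpha y$ for some $\alpha\in\mathbb{K}^*$, and $\xi:S\to\mathcal{P}(S)$ the projection. A partial projective representation of $\mathcal{G}$ on $S$ is a map $\Gamma:\mathcal{G}\to S$ such that $\xi\Gamma$ is a partial homomorphism, i.e. whenever $\exists xy$: $\xi\Gamma(x^{-1})\xi\Gamma(x)\xi\Gamma(y)=\xi\Gamma(x^{-1})\xi\Gamma(xy)$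 and $\xi\Gamma(x)\xi\Gamma(y)\xi\Gamma(y^{-1})=\xi\Gamma(xy)\xi\Gamma(y^{-1})$. Its factor set is the unique partially defined map $\sigma:\mathcal{G}\times\mathcal{G}\to\mathbb{K}^*$ with $\mathrm{dom}\,\sigma=\{(x,y)\in\mathcal{G}^2:\Gamma(x)\Gamma(y)\ne0\}$ and $\Gamma(x^{-1})\Gamma(x)\Gamma(y)=\Gamma(x^{-1})\Gamma(xy)\sigma(x,y)$, $\Gamma(x)\Gamma(y)\Gamma(y^{-1})=\Gamma(xy)\Gamma(y^{-1})\sigma(x,y)$ for $(x,y)\in\mathrm{dom}\,\sigma$. *)

theory Defs
  imports Main
begin

text \<open>A groupoid is given by a carrier G, a product function mult (meaningful only on
composable pairs) and an inverse function ginv.\<close>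

definition gd :: "('g \<Rightarrow> 'g \<Rightarrow> 'g) \<Rightarrow> ('g \<Rightarrow> 'g) \<Rightarrow> 'g \<Rightarrow> 'g" where
  "gd mult ginv x = mult (ginv x) x"

definition gr :: "('g \<Rightarrow> 'g \<Rightarrow> 'g) \<Rightarrow> ('g \<Rightarrow> 'g) \<Rightarrow> 'g \<Rightarrow> 'g" where
  "gr mult ginv x = mult x (ginv x)"

definition composable :: "('g \<Rightarrow> 'g \<Rightarrow> 'g) \<Rightarrow> ('g \<Rightarrow> 'g) \<Rightarrow> 'g \<Rightarrow> 'g \<Rightarrow> bool" where
  "composable mult ginv x y \<longleftrightarrow> gd mult ginv x = gr mult ginv y"

definition groupoid :: "'g set \<Rightarrow> ('g \<Rightarrow> 'g \<Rightarrow> 'g) \<Rightarrow> ('g \<Rightarrow> 'g) \<Rightarrow> bool" where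
  "groupoid G mult ginv \<longleftrightarrow>
     G \<noteq> {} \<and>
     (\<forall>x\<in>G. ginv x \<in> G \<and> ginv (ginv x) = x) \<and>
     (\<forall>x\<in>G. \<forall>y\<in>G. composable mult ginv x y \<longrightarrow>
        mult x y \<in> G \<and> gd mult ginv (mult x y) = gd mult ginv y \<and>
        gr mult ginv (mult x y) = gr mult ginv x) \<and>
     (\<forall>x\<in>G. \<forall>y\<in>G. \<forall>z\<in>G. composable mult ginv x y \<and> composable mult ginv y z \<longrightarrow>
        mult (mult x y) z = mult x (mult y z)) \<and>
     (\<forall>x\<in>G. mult (gr mult ginv x) x = x \<and> mult x (gd mult ginv x) = x)"

definition K_semigroup :: "'s set \<Rightarrow> ('s \<Rightarrow> 's \<Rightarrow> 's) \<Rightarrow> 's \<Rightarrow> ('k::field \<Rightarrow> 's \<Rightarrow> 's) \<Rightarrow> bool" where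
  "K_semigroup S mul z act \<longleftrightarrow>
     (\<forall>x\<in>S. \<forall>y\<in>S. mul x y \<in> S) \<and>
     (\<forall>x\<in>S. \<forall>y\<in>S. \<forall>w\<in>S. mul (mul x y) w = mul x (mul y w)) \<and>
     z \<in> S \<and> (\<forall>x\<in>S. mul z x = z \<and> mul x z = z) \<and>
     (\<forall>\<alpha> x. x \<in> S \<longrightarrow> act \<alpha> x \<in> S) \<and>
     (\<forall>\<alpha> \<beta> x. x \<in> S \<longrightarrow> act \<alpha> (act \<beta> x) = act (\<alpha> * \<beta>) x) \<and>
     (\<forall>x\<in>S. act 1 x = x) \<and>
     (\<forall>\<alpha>. \<forall>x\<in>S. \<forall>y\<in>S. act \<alpha> (mul x y) = mul (act \<alpha> x) y \<and> act \<alpha> (mul x y) = mul x (act \<alpha> y)) \<and>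
     (\<forall>x\<in>S. act 0 x = z)"

definition K_cancellative :: "'s set \<Rightarrow> ('s \<Rightarrow> 's \<Rightarrow> 's) \<Rightarrow> 's \<Rightarrow> ('k::field \<Rightarrow> 's \<Rightarrow> 's) \<Rightarrow> bool" where
  "K_cancellative S mul z act \<longleftrightarrow> K_semigroup S mul z act \<and>
     (\<forall>\<alpha> \<beta> x. x \<in> S \<longrightarrow> x \<noteq> z \<longrightarrow> act \<alpha> x = act \<beta> x \<longrightarrow> \<alpha> = \<beta>)"

text \<open>Equality of projections in P(S) = S/lambda is exactly this relation, and the product
 of P(S) is induced by that of S (xi(a) xi(b) = xi(ab)).\<close>

definition proj_eq :: "('k::field \<Rightarrow> 's \<Rightarrow> 's) \<Rightarrow> 's \<Rightarrow> 's \<Rightarrow> bool" where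
  "proj_eq act a b \<longleftrightarrow> (\<exists>\<alpha>. \<alpha> \<noteq> 0 \<and> a = act \<alpha> b)"

definition partial_proj_rep ::
  "'g set \<Rightarrow> ('g \<Rightarrow> 'g \<Rightarrow> 'g) \<Rightarrow> ('g \<Rightarrow> 'g) \<Rightarrow> 's set \<Rightarrow> ('s \<Rightarrow> 's \<Rightarrow> 's) \<Rightarrow>
   ('k::field \<Rightarrow> 's \<Rightarrow> 's) \<Rightarrow> ('g \<Rightarrow> 's) \<Rightarrow> bool" where
  "partial_proj_rep G mult ginv S mul act \<Gamma> \<longleftrightarrow>
     (\<forall>x\<in>G. \<Gamma> x \<in> S) \<and>
     (\<forall>x\<in>G. \<forall>y\<in>G. composable mult ginv x y \<longrightarrow>
        proj_eq act (mul (mul (\<Gamma> (ginv x)) (\<Gamma> x)) (\<Gamma> y)) (mul (\<Gamma> (ginv x)) (\<Gamma> (mult x y))) \<and>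
        proj_eq act (mul (mul (\<Gamma> x) (\<Gamma> y)) (\<Gamma> (ginv y))) (mul (\<Gamma> (mult x y)) (\<Gamma> (ginv y))))"

definition factor_dom ::
  "'g set \<Rightarrow> ('g \<Rightarrow> 'g \<Rightarrow> 'g) \<Rightarrow> ('g \<Rightarrow> 'g) \<Rightarrow> ('s \<Rightarrow> 's \<Rightarrow> 's) \<Rightarrow> 's \<Rightarrow> ('g \<Rightarrow> 's) \<Rightarrow> ('g \<times> 'g) set" where
  "factor_dom G mult ginv mul z \<Gamma> =
     {(x, y). x \<in> G \<and> y \<in> G \<and> composable mult ginv x y \<and> mul (\<Gamma> x) (\<Gamma> y) \<noteq> z}"

text \<open>sigma is the factor set of Gamma: on dom sigma it takes values in K^* and satisfies
 the two defining equations (its values off dom sigma are irrelevant).\<close>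

definition factor_set ::
  "'g set \<Rightarrow> ('g \<Rightarrow> 'g \<Rightarrow> 'g) \<Rightarrow> ('g \<Rightarrow> 'g) \<Rightarrow> ('s \<Rightarrow> 's \<Rightarrow> 's) \<Rightarrow> 's \<Rightarrow>
   ('k::field \<Rightarrow> 's \<Rightarrow> 's) \<Rightarrow> ('g \<Rightarrow> 's) \<Rightarrow> ('g \<Rightarrow> 'g \<Rightarrow> 'k) \<Rightarrow> bool" where
  "factor_set G mult ginv mul z act \<Gamma> \<sigma> \<longleftrightarrow>
     (\<forall>(x, y) \<in> factor_dom G mult ginv mul z \<Gamma>.
        \<sigma> x y \<noteq> 0 \<and>
        mul (mul (\<Gamma> (ginv x)) (\<Gamma> x)) (\<Gamma> y) = act (\<sigma> x y) (mul (\<Gamma> (ginv x)) (\<Gamma> (mult x y))) \<and>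
        mul (mul (\<Gamma> x) (\<Gamma> y)) (\<Gamma> (ginv y)) = act (\<sigma> x y) (mul (\<Gamma> (mult x y)) (\<Gamma> (ginv y))))"

end

theory Submission
  imports Defs
begin

lemma key:
  fixes G :: "'g set" and mult :: "'g \<Rightarrow> 'g \<Rightarrow> 'g" and ginv :: "'g \<Rightarrow> 'g"
    and S :: "'s set" and mul :: "'s \<Rightarrow> 's \<Rightarrow> 's" and z :: 's
    and act :: "'k::field \<Rightarrow> 's \<Rightarrow> 's"
    and \<Gamma> :: "'g \<Rightarrow> 's" and \<sigma> :: "'g \<Rightarrow> 'g \<Rightarrow> 'k"
  assumes grp: "groupoid G mult ginv"
    and KC: "K_cancellative S mul z act"
    and PR: "partial_proj_rep G mult ginv S mul act \<Gamma>"
    and FS: "factor_set G mult ginv mul z act \<Gamma> \<sigma>"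
    and U: "\<forall>x\<in>G. mul (\<Gamma> (gr mult ginv x)) (\<Gamma> x) = \<Gamma> x \<and> \<Gamma> x = mul (\<Gamma> x) (\<Gamma> (gd mult ginv x))"
    and xG: "x \<in> G" and nz: "\<Gamma> x \<noteq> z"
  shows "(x, gd mult ginv x) \<in> factor_dom G mult ginv mul z \<Gamma> \<and>
         (gr mult ginv x, x) \<in> factor_dom G mult ginv mul z \<Gamma> \<and>
         \<sigma> x (gd mult ginv x) = 1 \<and> \<sigma> (gr mult ginv x) x = 1"
proof -
  let ?d = "gd mult ginv x" and ?r = "gr mult ginv x" and ?i = "ginv x"
  have iG: "?i \<in> G" and ii: "ginv ?i = x" using grp xG unfolding groupoid_def by auto
  have c1: "composable mult ginv x ?i" unfolding composable_def gd_def gr_def using ii by simp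
  have c2: "composable mult ginv ?i x" unfolding composable_def gd_def gr_def using ii by simp
  have dG: "?d \<in> G" and gdd: "gr mult ginv ?d = ?d"
    using grp xG iG c2 ii unfolding groupoid_def gd_def gr_def by auto
  have rG: "?r \<in> G" and grr: "gd mult ginv ?r = ?r"
    using grp xG iG c1 ii unfolding groupoid_def gd_def gr_def by auto
  have cd: "composable mult ginv x ?d" using gdd unfolding composable_def by simp
  have cr: "composable mult ginv ?r x" using grr unfolding composable_def by simp
  have mxd: "mult x ?d = x" and mrx: "mult ?r x = x" using grp xG unfolding groupoid_def by auto
  have S1: "\<forall>x\<in>S. \<forall>y\<in>S. mul x y \<in> S" and SA: "\<forall>x\<in>S. \<forall>y\<in>S. \<forall>w\<in>S. mul (mul x y) w = mul x (mul y w)"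
    and zS: "z \<in> S" and zz: "\<forall>x\<in>S. mul z x = z \<and> mul x z = z"
    and aS: "\<forall>\<alpha> x. x \<in> S \<longrightarrow> act \<alpha> x \<in> S"
    and aa: "\<forall>\<alpha> \<beta> x. x \<in> S \<longrightarrow> act \<alpha> (act \<beta> x) = act (\<alpha> * \<beta>) x"
    and a1: "\<forall>x\<in>S. act 1 x = x"
    and am: "\<forall>\<alpha>. \<forall>x\<in>S. \<forall>y\<in>S. act \<alpha> (mul x y) = mul (act \<alpha> x) y \<and> act \<alpha> (mul x y) = mul x (act \<alpha> y)"
    and canc: "\<forall>\<alpha> \<beta> x. x \<in> S \<longrightarrow> x \<noteq> z \<longrightarrow> act \<alpha> x = act \<beta> x \<longrightarrow> \<alpha> = \<beta>"
    using KC unfolding K_cancellative_def K_semigroup_def by blast+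
  have GS: "\<forall>x\<in>G. \<Gamma> x \<in> S" using PR unfolding partial_proj_rep_def by blast
  have actz: "act \<beta> z = z" for \<beta>
  proof -
    have "act \<beta> z = act \<beta> (mul z z)" using zz zS by simp
    also have "\<dots> = mul (act \<beta> z) z" using am zS by blast
    also have "\<dots> = z" using zz aS zS by blast
    finally show ?thesis .
  qed
  have Gx: "\<Gamma> x \<in> S" and Gi: "\<Gamma> ?i \<in> S" and Gd: "\<Gamma> ?d \<in> S" and Gr: "\<Gamma> ?r \<in> S"
    using GS xG iG dG rG by auto
  have "proj_eq act (mul (mul (\<Gamma> (ginv ?i)) (\<Gamma> ?i)) (\<Gamma> x)) (mul (\<Gamma> (ginv ?i)) (\<Gamma> (mult ?i x)))"
    using PR iG xG c2 unfolding partial_proj_rep_def by blast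
  then obtain \<alpha> where a0: "\<alpha> \<noteq> 0" and eq: "mul (mul (\<Gamma> x) (\<Gamma> ?i)) (\<Gamma> x) = act \<alpha> (\<Gamma> x)"
    unfolding proj_eq_def using ii U xG unfolding gd_def by auto
  have ne3: "mul (mul (\<Gamma> x) (\<Gamma> ?i)) (\<Gamma> x) \<noteq> z"
  proof
    assume "mul (mul (\<Gamma> x) (\<Gamma> ?i)) (\<Gamma> x) = z"
    then have "act \<alpha> (\<Gamma> x) = z" using eq by simp
    then have "act (inverse \<alpha>) (act \<alpha> (\<Gamma> x)) = z" using actz by simp
    then have "\<Gamma> x = z" using aa a1 Gx a0 by simp
    then show False using nz by simp
  qed
  have B: "mul (\<Gamma> ?i) (\<Gamma> x) \<noteq> z"
  proof
    assume "mul (\<Gamma> ?i) (\<Gamma> x) = z"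
    then have "mul (mul (\<Gamma> x) (\<Gamma> ?i)) (\<Gamma> x) = z" using SA Gx Gi zz by metis
    then show False using ne3 by simp
  qed
  have A: "mul (\<Gamma> x) (\<Gamma> ?i) \<noteq> z"
  proof
    assume "mul (\<Gamma> x) (\<Gamma> ?i) = z"
    then show False using ne3 zz Gx by simp
  qed
  have Ux: "mul (\<Gamma> ?r) (\<Gamma> x) = \<Gamma> x" "mul (\<Gamma> x) (\<Gamma> ?d) = \<Gamma> x" using U xG by auto
  have D1: "(x, ?d) \<in> factor_dom G mult ginv mul z \<Gamma>"
    unfolding factor_dom_def using xG dG cd Ux nz by simp
  have D2: "(?r, x) \<in> factor_dom G mult ginv mul z \<Gamma>"
    unfolding factor_dom_def using xG rG cr Ux nz by simp
  have e1: "mul (mul (\<Gamma> ?i) (\<Gamma> x)) (\<Gamma> ?d) = act (\<sigma> x ?d) (mul (\<Gamma> ?i) (\<Gamma> (mult x ?d)))"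
    using FS D1 unfolding factor_set_def by fast
  then have "mul (\<Gamma> ?i) (\<Gamma> x) = act (\<sigma> x ?d) (mul (\<Gamma> ?i) (\<Gamma> x))"
    using mxd SA Gi Gx Gd Ux by metis
  then have s1: "\<sigma> x ?d = 1" using canc a1 S1 Gi Gx B by metis
  have e2: "mul (mul (\<Gamma> ?r) (\<Gamma> x)) (\<Gamma> (ginv x)) = act (\<sigma> ?r x) (mul (\<Gamma> (mult ?r x)) (\<Gamma> (ginv x)))"
    using FS D2 unfolding factor_set_def by fast
  then have "mul (\<Gamma> x) (\<Gamma> ?i) = act (\<sigma> ?r x) (mul (\<Gamma> x) (\<Gamma> ?i))"
    using mrx Ux by metis
  then have s2: "\<sigma> ?r x = 1" using canc a1 S1 Gi Gx A by metis
  show ?thesis using D1 D2 s1 s2 by blast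
qed

theorem mainTheorem9:
  fixes G :: "'g set" and mult :: "'g \<Rightarrow> 'g \<Rightarrow> 'g" and ginv :: "'g \<Rightarrow> 'g"
    and S :: "'s set" and mul :: "'s \<Rightarrow> 's \<Rightarrow> 's" and z :: 's
    and act :: "'k::field \<Rightarrow> 's \<Rightarrow> 's"
    and \<Gamma> :: "'g \<Rightarrow> 's" and \<sigma> :: "'g \<Rightarrow> 'g \<Rightarrow> 'k"
  assumes "groupoid G mult ginv"
    and "K_cancellative S mul z act"
    and "partial_proj_rep G mult ginv S mul act \<Gamma>"
    and "factor_set G mult ginv mul z act \<Gamma> \<sigma>"
    and "\<forall>x\<in>G. mul (\<Gamma> (gr mult ginv x)) (\<Gamma> x) = \<Gamma> x \<and> \<Gamma> x = mul (\<Gamma> x) (\<Gamma> (gd mult ginv x))"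
    and "(x, y) \<in> factor_dom G mult ginv mul z \<Gamma>"
  shows "(x, gd mult ginv x) \<in> factor_dom G mult ginv mul z \<Gamma> \<and>
         (gr mult ginv y, y) \<in> factor_dom G mult ginv mul z \<Gamma> \<and>
         \<sigma> x (gd mult ginv x) = 1 \<and> \<sigma> (gr mult ginv x) x = 1 \<and>
         \<sigma> y (gd mult ginv y) = 1 \<and> \<sigma> (gr mult ginv y) y = 1"
proof -
  have d: "x \<in> G" "y \<in> G" "mul (\<Gamma> x) (\<Gamma> y) \<noteq> z" using assms(6) unfolding factor_dom_def by auto
  have zz: "\<forall>x\<in>S. mul z x = z \<and> mul x z = z" using assms(2) unfolding K_cancellative_def K_semigroup_def by blast
  have GS: "\<forall>x\<in>G. \<Gamma> x \<in> S" using assms(3) unfolding partial_proj_rep_def by blast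
  have "\<Gamma> x \<noteq> z" "\<Gamma> y \<noteq> z" using d zz GS by auto
  then show ?thesis using key[OF assms(1-5)] d by blast
qed

end
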